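(* Let $A:\mathbb{R}^N\to\mathbb{R}^{N\times N}$ be such that $A(y)$ is symmetric positive semidefinite for all $y$ and $\|A(u)-A(v)\|\le L\|u-v\|$ for all $u,v$, with $L>0$. Let $t_n\in\mathbb{R}$, $\Delta t>0$, $y^n,g^{n+1}\in\mathbb{R}^N$, and let $\tilde y:[t_n,t_n+\Delta t]\to\mathbb{R}^N$ solve $$\tilde y'(t)=-A(\tilde y(t))\tilde y(t)+g^{n+1},\qquad \tilde y(t_n)=y^n.$$ Define $\tilde y^{(0)}(t)\equiv y^n$ and, for $m\ge0$, $\tilde y^{(m+1)}$ as the solution on $[t_n,t_n+\Delta t]$ of $(\tilde y^{(m+1)})'(t)=-A(\tilde y^{(m)}(t))\tilde y^{(m+1)}(t)+g^{n+1}$, $\tilde y^{(m+1)}(t_n)=y^n$. Let $\omega\ge 0$ be such that $(A(\tilde y^{(m)}(t))x,x)\ge\omega(x,x)$ for all $x\in\mathbb{R}^N$, all $t\in[t_n,t_n+\Delta t]$ and all $m\ge0$. If $$\Delta t\,\varphi(-\Delta t\,\omega)\,L\max_{s\in[t_n,t_n+\Delta t]}\|\tilde y(s)\|<1,$$ then $$\max_{s\in[t_n,t_n+\Delta t]}\|\tilde y(s)-\tilde y^{(m+1)}(s)\|\le \Delta t\,\varphi(-\Delta t\omega)\,L\max_{s}\|\tilde y(s)\|\;\max_{s\in[t_n,t_n+\Delta t]}\|\tilde y(s)-\tilde y^{(m)}(s)\|$$ for all $m\ge0$, and consequently $\max_{s\in[t_n,t_n+\Delta t]}\|\tilde y(s)-\tilde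 y^{(m)}(s)\|\to0$ as $m\to\infty$.
   Context: $(x,y)=y^Tx$ is the standard inner product; $\|\cdot\|$ is the Euclidean vector norm and induced matrix norm. $\varphi(z)=(e^z-1)/z$ with $\varphi(0)=1$; for $t\ge0$, $t\varphi(-t\omega)=t$ if $\omega=0$ and $=(1-e^{-t\omega})/\omega$ if $\omega>0$. *)

theory Defs
  imports "HOL-Analysis.Analysis"
begin

definition phi :: "real \<Rightarrow> real" where
  "phi z = (if z = 0 then 1 else (exp z - 1) / z)"

definition mat_norm :: "real^'n^'n \<Rightarrow> real" where
  "mat_norm M = onorm (\<lambda>x. M *v x)"

end

theory Submission
  imports Defs
begin

lemma key:
  fixes e e' :: "real \<Rightarrow> 'a::real_inner" and \<Phi> :: "real \<Rightarrow> real"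
  assumes ab: "a \<le> b" and e0: "e a = 0" and cont: "continuous_on {a..b} e"
    and der: "\<And>t. a < t \<Longrightarrow> t < b \<Longrightarrow> (e has_vector_derivative e' t) (at t)"
    and ineq: "\<And>t. a < t \<Longrightarrow> t < b \<Longrightarrow> e t \<bullet> e' t \<le> - \<omega> * (norm (e t))^2 + c * norm (e t)"
    and c: "c \<ge> 0"
    and Phi: "\<And>t. (\<Phi> has_real_derivative exp (\<omega> * (t - a))) (at t)"
    and Phinn: "\<And>t. a \<le> t \<Longrightarrow> 0 \<le> \<Phi> t"
    and t: "t \<in> {a..b}"
  shows "exp (\<omega> * (t - a)) * norm (e t) \<le> c * \<Phi> t"
proof (rule ccontr)
  assume neg: "\<not> ?thesis"
  define F where "F = (\<lambda>s. exp (\<omega> * (s - a)) * norm (e s) - c * \<Phi> s)"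
  have Ft: "F t > 0" using neg by (simp add: F_def)
  have et: "e t \<noteq> 0"
  proof
    assume "e t = 0"
    then have "F t = - c * \<Phi> t" by (simp add: F_def)
    also have "\<dots> \<le> 0" using c Phinn[of t] t by simp
    finally show False using Ft by simp
  qed
  define Z where "Z = {s \<in> {a..t}. e s = 0}"
  have contt: "continuous_on {a..t} e" using cont t by (auto intro: continuous_on_subset)
  have Zcl: "closed Z" unfolding Z_def
    by (rule continuous_closed_preimage_constant[OF contt closed_atLeastAtMost])
  have Zne: "Z \<noteq> {}" using e0 t by (auto simp: Z_def)
  have Zbdd: "bdd_above Z" by (auto simp: Z_def bdd_above_def)
  define t0 where "t0 = Sup Z"
  have t0Z: "t0 \<in> Z" unfolding t0_def using closed_contains_Sup[OF Zne Zbdd Zcl] .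
  have t0t: "t0 < t" using t0Z et by (auto simp: Z_def order.order_iff_strict)
  have at0: "a \<le> t0" using t0Z by (auto simp: Z_def)
  have nz: "e s \<noteq> 0" if "t0 < s" "s \<le> t" for s
  proof
    assume "e s = 0"
    then have "s \<in> Z" using that at0 by (auto simp: Z_def)
    then have "s \<le> t0" unfolding t0_def using Zbdd by (rule cSup_upper)
    then show False using that by simp
  qed
  have dF: "(F has_real_derivative exp (\<omega> * (s - a)) * (\<omega> * norm (e s) + (e' s \<bullet> e s) / norm (e s) - c)) (at s)"
    if "t0 < s" "s < t" for s
  proof -
    have es: "e s \<noteq> 0" using nz that by simp
    have d1: "(e has_derivative (\<lambda>h. h *\<^sub>R e' s)) (at s)"
      using der[of s] that at0 t by (simp add: has_vector_derivative_def)
    have d2: "((\<lambda>s. norm (e s)) has_derivative (\<lambda>h. (h *\<^sub>R e' s) \<bullet> sgn (e s))) (at s)"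
      using has_derivative_compose[OF d1 has_derivative_norm[OF es]] by (simp add: o_def)
    have d3: "((\<lambda>s. norm (e s)) has_real_derivative (e' s \<bullet> e s) / norm (e s)) (at s)"
      using d2 by (rule has_derivative_imp_has_field_derivative)
        (simp add: sgn_div_norm inner_commute field_simps)
    have d4: "((\<lambda>s. exp (\<omega> * (s - a))) has_real_derivative exp (\<omega> * (s - a)) * \<omega>) (at s)"
      by (auto intro!: derivative_eq_intros)
    have "(F has_real_derivative (exp (\<omega> * (s - a)) * \<omega> * norm (e s) + exp (\<omega> * (s - a)) * ((e' s \<bullet> e s) / norm (e s)) - c * exp (\<omega> * (s - a)))) (at s)"
      unfolding F_def
    proof (intro DERIV_diff DERIV_cmult Phi)
      show "((\<lambda>x. exp (\<omega> * (x - a)) * norm (e x)) has_real_derivative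
       exp (\<omega> * (s - a)) * \<omega> * norm (e s) + exp (\<omega> * (s - a)) * (e' s \<bullet> e s / norm (e s))) (at s)"
        using DERIV_mult[OF d4 d3] by (simp add: algebra_simps)
    qed
    then show ?thesis by (simp add: algebra_simps)
  qed
  have contF: "continuous_on {t0..t} F"
  proof -
    have "continuous_on {t0..t} e" using contt at0 by (auto intro: continuous_on_subset)
    moreover have "continuous_on {t0..t} \<Phi>"
      using Phi by (meson DERIV_isCont continuous_at_imp_continuous_on)
    ultimately show ?thesis unfolding F_def by (intro continuous_intros)
  qed
  obtain l z where z: "t0 < z" "z < t" "DERIV F z :> l" "F t - F t0 = (t - t0) * l"
    using MVT[OF t0t contF] dF by (meson real_differentiable_def)
  have l: "l = exp (\<omega> * (z - a)) * (\<omega> * norm (e z) + (e' z \<bullet> e z) / norm (e z) - c)"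
    using DERIV_unique[OF z(3) dF[OF z(1,2)]] .
  have ez: "norm (e z) > 0" using nz z by simp
  have "e z \<bullet> e' z \<le> - \<omega> * (norm (e z))^2 + c * norm (e z)"
    using ineq z at0 t by simp
  then have "(e' z \<bullet> e z) / norm (e z) \<le> - \<omega> * norm (e z) + c"
    using ez by (simp add: divide_simps inner_commute power2_eq_square algebra_simps)
  then have "l \<le> 0" unfolding l by (simp add: mult_nonneg_nonpos)
  then have "(t - t0) * l \<le> 0" using t0t by (simp add: mult_nonneg_nonpos)
  then have "F t \<le> F t0" using z(4) by simp
  moreover have "F t0 \<le> 0" using t0Z c Phinn[of t0] at0 by (simp add: F_def Z_def)
  ultimately show False using Ft by simp
qed

lemma step_bound:
  fixes e e' :: "real \<Rightarrow> 'a::real_inner"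
  assumes dt: "dt > 0" and om: "\<omega> \<ge> 0" and e0: "e a = 0" and cont: "continuous_on {a..a+dt} e"
    and der: "\<And>t. a < t \<Longrightarrow> t < a+dt \<Longrightarrow> (e has_vector_derivative e' t) (at t)"
    and ineq: "\<And>t. a < t \<Longrightarrow> t < a+dt \<Longrightarrow> e t \<bullet> e' t \<le> - \<omega> * (norm (e t))^2 + c * norm (e t)"
    and c: "c \<ge> 0"
    and t: "t \<in> {a..a+dt}"
  shows "norm (e t) \<le> c * (dt * phi (- dt * \<omega>))"
proof (cases "\<omega> = 0")
  case True
  have "exp (\<omega> * (t - a)) * norm (e t) \<le> c * (t - a)"
    by (rule key[where \<Phi>="\<lambda>t. t - a", OF _ e0 cont der ineq c _ _ t])
      (use dt True in \<open>auto intro!: derivative_eq_intros\<close>)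
  also have "\<dots> \<le> c * dt" using t c by (intro mult_left_mono) auto
  finally show ?thesis using True by (simp add: phi_def)
next
  case False
  then have wp: "\<omega> > 0" using om by simp
  have "exp (\<omega> * (t - a)) * norm (e t) \<le> c * ((exp (\<omega> * (t - a)) - 1) / \<omega>)"
    by (rule key[where \<Phi>="\<lambda>t. (exp (\<omega> * (t - a)) - 1) / \<omega>", OF _ e0 cont der ineq c _ _ t])
      (use dt wp in \<open>auto intro!: derivative_eq_intros simp: field_simps\<close>)
  then have "norm (e t) \<le> c * ((exp (\<omega> * (t - a)) - 1) / \<omega>) / exp (\<omega> * (t - a))"
    by (metis exp_gt_zero mult.commute pos_le_divide_eq)
  also have "\<dots> = c * ((1 - 1 / exp (\<omega> * (t - a))) / \<omega>)"
    using wp by (simp add: field_simps)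
  also have "\<dots> = c * ((1 - exp (- \<omega> * (t - a))) / \<omega>)"
    by (simp add: exp_minus inverse_eq_divide)
  also have "\<dots> \<le> c * ((1 - exp (- \<omega> * dt)) / \<omega>)"
    using t wp c by (intro mult_left_mono divide_right_mono) auto
  also have "\<dots> = c * (dt * phi (- dt * \<omega>))"
    using wp dt by (simp add: phi_def field_simps)
  finally show ?thesis .
qed

lemma bdd_norm:
  fixes f :: "real \<Rightarrow> 'a::real_normed_vector"
  assumes "continuous_on {a..b} f"
  shows "bdd_above ((\<lambda>s. norm (f s)) ` {a..b})"
proof -
  have "compact ((\<lambda>s. norm (f s)) ` {a..b})"
    by (intro compact_continuous_image continuous_intros assms compact_Icc)
  then show ?thesis by (intro bounded_imp_bdd_above compact_imp_bounded)
qed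

lemma phi_pos: "z \<le> 0 \<Longrightarrow> phi z > 0"
proof (cases "z = 0")
  case False
  assume "z \<le> 0"
  then have "z < 0" using False by simp
  then have "exp z < 1" by simp
  then show ?thesis using \<open>z < 0\<close> by (simp add: phi_def divide_neg_neg)
qed (simp add: phi_def)

theorem corollary4:
  fixes A :: "real^'n \<Rightarrow> real^'n^'n"
    and L tn dt \<omega> :: real
    and yn g :: "real^'n"
    and ytil :: "real \<Rightarrow> real^'n"
    and Y :: "nat \<Rightarrow> real \<Rightarrow> real^'n"
  assumes sym: "\<And>y. transpose (A y) = A y"
    and psd: "\<And>y x. 0 \<le> (A y *v x) \<bullet> x"
    and lip: "\<And>u v. mat_norm (A u - A v) \<le> L * norm (u - v)"
    and Lpos: "L > 0"
    and dtpos: "dt > 0"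
    and ytil_ode: "\<And>t. t \<in> {tn..tn+dt} \<Longrightarrow>
        (ytil has_vector_derivative (- (A (ytil t) *v ytil t) + g)) (at t within {tn..tn+dt})"
    and ytil_init: "ytil tn = yn"
    and Y0: "\<And>t. t \<in> {tn..tn+dt} \<Longrightarrow> Y 0 t = yn"
    and Y_ode: "\<And>m t. t \<in> {tn..tn+dt} \<Longrightarrow>
        (Y (Suc m) has_vector_derivative (- (A (Y m t) *v Y (Suc m) t) + g)) (at t within {tn..tn+dt})"
    and Y_init: "\<And>m. Y (Suc m) tn = yn"
    and omega_nonneg: "\<omega> \<ge> 0"
    and omega: "\<And>m t x. t \<in> {tn..tn+dt} \<Longrightarrow> (A (Y m t) *v x) \<bullet> x \<ge> \<omega> * (x \<bullet> x)"
    and small: "dt * phi (- dt * \<omega>) * L * (SUP s\<in>{tn..tn+dt}. norm (ytil s)) < 1"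
  shows "(\<forall>m. (SUP s\<in>{tn..tn+dt}. norm (ytil s - Y (Suc m) s))
            \<le> dt * phi (- dt * \<omega>) * L * (SUP s\<in>{tn..tn+dt}. norm (ytil s))
               * (SUP s\<in>{tn..tn+dt}. norm (ytil s - Y m s)))
       \<and> (\<lambda>m. SUP s\<in>{tn..tn+dt}. norm (ytil s - Y m s)) \<longlonglongrightarrow> 0"
proof -
  define I where "I = {tn..tn+dt}"
  have Ine: "I \<noteq> {}" using dtpos by (simp add: I_def)
  have cont_ytil: "continuous_on I ytil"
    unfolding I_def continuous_on_eq_continuous_within
    using ytil_ode has_vector_derivative_continuous by blast
  have cont_Y: "continuous_on I (Y m)" for m
  proof (cases m)
    case 0
    have "continuous_on I (\<lambda>t. yn)" by (rule continuous_on_const)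
    moreover have "continuous_on I (Y 0) = continuous_on I (\<lambda>t. yn)"
      by (rule continuous_on_cong) (auto simp: I_def Y0)
    ultimately show ?thesis using 0 by simp
  next
    case (Suc k)
    then show ?thesis
      unfolding I_def continuous_on_eq_continuous_within
      using Y_ode has_vector_derivative_continuous by blast
  qed
  define M where "M = (SUP s\<in>I. norm (ytil s))"
  define D where "D = (\<lambda>m. SUP s\<in>I. norm (ytil s - Y m s))"
  define q where "q = dt * phi (- dt * \<omega>) * L * M"
  have bM: "bdd_above ((\<lambda>s. norm (ytil s)) ` I)"
    using cont_ytil unfolding I_def by (rule bdd_norm)
  have bD: "bdd_above ((\<lambda>s. norm (ytil s - Y m s)) ` I)" for m
    using continuous_on_diff[OF cont_ytil cont_Y[of m]] unfolding I_def by (rule bdd_norm)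
  have leM: "norm (ytil s) \<le> M" if "s \<in> I" for s
    unfolding M_def by (rule cSUP_upper[OF that bM])
  have leD: "norm (ytil s - Y m s) \<le> D m" if "s \<in> I" for s m
    unfolding D_def by (rule cSUP_upper[OF that bD])
  have Mnn: "M \<ge> 0" using leM Ine by (meson all_not_in_conv norm_ge_zero order_trans)
  have Dnn: "D m \<ge> 0" for m using leD Ine by (meson all_not_in_conv norm_ge_zero order_trans)
  have qnn: "q \<ge> 0" unfolding q_def
    using dtpos Lpos Mnn phi_pos[of "- dt * \<omega>"] omega_nonneg by simp
  have q1: "q < 1" using small by (simp add: q_def M_def I_def)
  have stepm: "D (Suc m) \<le> q * D m" for m
  proof -
    define e where "e = (\<lambda>s. ytil s - Y (Suc m) s)"
    define e' where "e' = (\<lambda>s. (- (A (ytil s) *v ytil s) + g) - (- (A (Y m s) *v Y (Suc m) s) + g))"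
    have pt: "norm (e t) \<le> (L * D m * M) * (dt * phi (- dt * \<omega>))" if t: "t \<in> I" for t
    proof (rule step_bound[where e'=e', OF dtpos omega_nonneg])
      show "e tn = 0" using ytil_init Y_init by (simp add: e_def)
      show "continuous_on {tn..tn + dt} e" unfolding e_def
        using continuous_on_diff[OF cont_ytil cont_Y] by (simp add: I_def)
      show "(e has_vector_derivative e' s) (at s)" if "tn < s" "s < tn + dt" for s
      proof -
        have "(e has_vector_derivative e' s) (at s within {tn..tn+dt})"
          unfolding e_def e'_def using that
          by (intro has_vector_derivative_diff ytil_ode Y_ode) auto
        then show ?thesis using that by (simp add: at_within_Icc_at)
      qed
      show "L * D m * M \<ge> 0" using Lpos Dnn Mnn by simp
      show "t \<in> {tn..tn + dt}" using t by (simp add: I_def)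
      show "e s \<bullet> e' s \<le> - \<omega> * (norm (e s))^2 + L * D m * M * norm (e s)"
        if "tn < s" "s < tn + dt" for s
      proof -
        have sI: "s \<in> I" using that by (simp add: I_def)
        define B where "B = A (ytil s) - A (Y m s)"
        have e'eq: "e' s = - (A (Y m s) *v e s) - (B *v ytil s)"
          unfolding e'_def e_def B_def
          by (simp add: matrix_vector_mult_diff_distrib matrix_vector_mult_diff_rdistrib algebra_simps)
        have "e s \<bullet> e' s = - ((A (Y m s) *v e s) \<bullet> e s) - ((B *v ytil s) \<bullet> e s)"
          by (simp add: e'eq inner_diff_right inner_commute)
        also have "\<dots> \<le> - (\<omega> * (e s \<bullet> e s)) + norm (B *v ytil s) * norm (e s)"
        proof -
          have "- ((B *v ytil s) \<bullet> e s) \<le> norm (B *v ytil s) * norm (e s)"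
            using norm_cauchy_schwarz[of "- (B *v ytil s)" "e s"] by simp
          then show ?thesis using omega[where m=m and t=s and x="e s"] sI by (simp add: I_def)
        qed
        also have "norm (B *v ytil s) \<le> L * D m * M"
        proof -
          have "norm (B *v ytil s) \<le> mat_norm B * norm (ytil s)"
            unfolding mat_norm_def by (rule onorm[OF matrix_vector_mul_bounded_linear])
          also have "\<dots> \<le> (L * norm (ytil s - Y m s)) * norm (ytil s)"
            using lip[of "ytil s" "Y m s"] by (intro mult_right_mono) (auto simp: B_def)
          also have "\<dots> \<le> (L * D m) * M"
            using leD[OF sI, of m] leM[OF sI] Lpos Dnn[of m]
            by (intro mult_mono mult_left_mono) auto
          finally show ?thesis .
        qed
        then have "- (\<omega> * (e s \<bullet> e s)) + norm (B *v ytil s) * norm (e s)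
                    \<le> - (\<omega> * (e s \<bullet> e s)) + L * D m * M * norm (e s)"
          by (simp add: mult_right_mono)
        finally show ?thesis by (simp add: power2_norm_eq_inner)
      qed
    qed
    have "D (Suc m) \<le> (L * D m * M) * (dt * phi (- dt * \<omega>))"
    proof -
      have "(SUP s\<in>I. norm (ytil s - Y (Suc m) s)) \<le> (L * D m * M) * (dt * phi (- dt * \<omega>))"
        using Ine pt by (intro cSUP_least) (auto simp: e_def)
      then show ?thesis by (simp add: D_def)
    qed
    then show ?thesis by (simp add: q_def algebra_simps)
  qed
  have pow: "D m \<le> q ^ m * D 0" for m
  proof (induction m)
    case (Suc m)
    have "D (Suc m) \<le> q * D m" by (rule stepm)
    also have "\<dots> \<le> q * (q ^ m * D 0)" using Suc qnn by (intro mult_left_mono)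
    finally show ?case by simp
  qed simp
  have "(\<lambda>m. q ^ m * D 0) \<longlonglongrightarrow> 0"
    using LIMSEQ_power_zero[of q] qnn q1 by (intro tendsto_mult_left_zero) auto
  then have lim: "D \<longlonglongrightarrow> 0"
    by (rule tendsto_sandwich[rotated 2, OF tendsto_const]) (use Dnn pow in auto)
  show ?thesis
    using stepm lim by (simp add: D_def q_def M_def I_def)
qed

end
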